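(* For every integer $n\geq 2$, $LD(P_2\square P_n)\geq \left\lceil \frac{3n-1}{4}\right\rceil$.
   Context: $P_n$ is the path on $n$ vertices and $\square$ is the Cartesian product of graphs. For a graph $G$, $C\subseteq V(G)$ and $v\in V(G)$ let $I(v)=N[v]\cap C$ ($N[v]$ the closed neighborhood). $C$ is a locating-dominating set if $I(v)\neq\emptyset$ for all $v\in V(G)\setminus C$ and $I(u)\neq I(v)$ for all distinct $u,v\in V(G)\setminus C$. $LD(G)$ is the minimum cardinality of a locating-dominating set of $G$. *)

theory Defs
  imports Complex_Main
begin

definition closed_nbhd :: "'a set \<Rightarrow> ('a \<Rightarrow> 'a \<Rightarrow> bool) \<Rightarrow> 'a \<Rightarrow> 'a set" where
  "closed_nbhd V E v = {u \<in> V. u = v \<or> E v u}"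

definition locating_dominating :: "'a set \<Rightarrow> ('a \<Rightarrow> 'a \<Rightarrow> bool) \<Rightarrow> 'a set \<Rightarrow> bool" where
  "locating_dominating V E C \<longleftrightarrow> C \<subseteq> V \<and>
     (\<forall>v \<in> V - C. closed_nbhd V E v \<inter> C \<noteq> {}) \<and>
     (\<forall>u \<in> V - C. \<forall>v \<in> V - C. u \<noteq> v \<longrightarrow> closed_nbhd V E u \<inter> C \<noteq> closed_nbhd V E v \<inter> C)"

definition LD :: "'a set \<Rightarrow> ('a \<Rightarrow> 'a \<Rightarrow> bool) \<Rightarrow> nat" where
  "LD V E = Min (card ` {C. locating_dominating V E C})"

definition path_adj :: "nat \<Rightarrow> nat \<Rightarrow> bool" where
  "path_adj i j \<longleftrightarrow> i + 1 = j \<or> j + 1 = i"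

definition grid_V :: "nat \<Rightarrow> (nat \<times> nat) set" where
  "grid_V n = {0..<2} \<times> {0..<n}"

definition grid_E :: "(nat \<times> nat) \<Rightarrow> (nat \<times> nat) \<Rightarrow> bool" where
  "grid_E p q \<longleftrightarrow> (fst p = fst q \<and> path_adj (snd p) (snd q)) \<or>
                   (snd p = snd q \<and> path_adj (fst p) (fst q))"

end

theory Submission
  imports Defs
begin

definition X :: "nat \<Rightarrow> nat \<Rightarrow> bool" where
  "X r s = (if r = 0 then s = 1 \<or> s = 3 else s = 2 \<or> s = 3)"

definition rowok :: "nat \<Rightarrow> nat \<Rightarrow> nat \<Rightarrow> nat \<Rightarrow> nat \<Rightarrow> nat \<Rightarrow> bool" where
  "rowok r s0 s1 s2 s3 s4 \<longleftrightarrow> (\<not> X r s1 \<longrightarrow>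
     (X r s0 \<or> X (1-r) s1 \<or> X r s2) \<and>
     (s2 \<noteq> 4 \<and> \<not> X (1-r) s2 \<longrightarrow> X r s0 \<or> X (1-r) s3) \<and>
     (s3 \<noteq> 4 \<and> \<not> X r s3 \<longrightarrow> X r s0 \<or> X (1-r) s1 \<or> X (1-r) s3 \<or> X r s4))"

definition valid :: "nat \<Rightarrow> nat \<Rightarrow> nat \<Rightarrow> nat \<Rightarrow> nat \<Rightarrow> bool" where
  "valid s0 s1 s2 s3 s4 \<longleftrightarrow> s1 \<noteq> 4 \<and> (s2 = 4 \<longrightarrow> s3 = 4) \<and> (s3 = 4 \<longrightarrow> s4 = 4) \<and>
     rowok 0 s0 s1 s2 s3 s4 \<and> rowok 1 s0 s1 s2 s3 s4"

definition cnt :: "nat \<Rightarrow> int" where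
  "cnt s = (if s = 3 then 2 else if s = 1 \<or> s = 2 then 1 else 0)"

definition pot :: "nat \<Rightarrow> nat \<Rightarrow> nat \<Rightarrow> nat \<Rightarrow> int" where
  "pot s0 s1 s2 s3 = (if s0 = 0 then (if s1 = 0 then (if s2 = 0 then (if s3 = 0 then (1) else (if s3 = 1 then (1) else (if s3 = 2 then (1) else (if s3 = 3 then (1) else (1))))) else (if s2 = 1 then (if s3 = 0 then (1) else (if s3 = 1 then (1) else (if s3 = 2 then (1) else (if s3 = 3 then (1) else (1))))) else (if s2 = 2 then (if s3 = 0 then (1) else (if s3 = 1 then (1) else (if s3 = 2 then (1) else (if s3 = 3 then (1) else (1))))) else (if s2 = 3 then (if s3 = 0 then (1) else (if s3 = 1 then (1) else (if s3 = 2 then (1) else (if s3 = 3 then (1) else (1))))) else (if s3 = 0 then (100) else (if s3 = 1 then (100) else (if s3 = 2 then (100) else (if s3 = 3 then (100) else (1))))))))) else (if s1 = 1 then (if s2 = 0 then (if s3 = 0 then (0) else (if s3 = 1 then (0) else (if s3 = 2 then (0) else (if s3 = 3 then (0) else (0))))) else (if s2 = 1 then (if s3 = 0 then (0) else (if s3 = 1 then (0) else (if s3 = 2 then (0) else (if s3 = 3 then (0) else (0))))) else (if s2 = 2 then (if s3 = 0 then (0) else (if s3 = 1 then (0) else (if s3 = 2 then (0) else (if s3 = 3 then (0) else (0))))) else (if s2 = 3 then (if s3 = 0 then (0) else (if s3 = 1 then (0) else (if s3 = 2 then (0) else (if s3 = 3 then (0) else (0))))) else (if s3 = 0 then (100)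 else (if s3 = 1 then (100) else (if s3 = 2 then (100) else (if s3 = 3 then (100) else (0))))))))) else (if s1 = 2 then (if s2 = 0 then (if s3 = 0 then (0) else (if s3 = 1 then (0) else (if s3 = 2 then (0) else (if s3 = 3 then (0) else (0))))) else (if s2 = 1 then (if s3 = 0 then (0) else (if s3 = 1 then (0) else (if s3 = 2 then (0) else (if s3 = 3 then (0) else (0))))) else (if s2 = 2 then (if s3 = 0 then (0) else (if s3 = 1 then (0) else (if s3 = 2 then (0) else (if s3 = 3 then (0) else (0))))) else (if s2 = 3 then (if s3 = 0 then (0) else (if s3 = 1 then (0) else (if s3 = 2 then (0) else (if s3 = 3 then (0) else (0))))) else (if s3 = 0 then (100) else (if s3 = 1 then (100) else (if s3 = 2 then (100) else (if s3 = 3 then (100) else (0))))))))) else (if s1 = 3 then (if s2 = 0 then (if s3 = 0 then (- 1) else (if s3 = 1 then (- 2) else (if s3 = 2 then (- 2) else (if s3 = 3 then (- 3) else (- 1))))) else (if s2 = 1 then (if s3 = 0 then (- 3) else (if s3 = 1 then (- 3) else (if s3 = 2 then (- 3) else (if s3 = 3 then (- 3) else (- 3))))) else (if s2 = 2 then (if s3 = 0 then (- 3) else (if s3 = 1 then (- 3) else (if s3 = 2 then (- 3) else (if s3 = 3 then (- 3) else (- 3))))) else (if s2 = 3 then (if s3 = 0 then (- 3) else (if s3 = 1 then (- 3) else (if s3 = 2 then (- 3) else (if s3 = 3 then (- 3) else (- 3))))) else (if s3 = 0 then (100) else (if s3 = 1 then (100) else (if s3 = 2 then (100) else (if s3 =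 3 then (100) else (- 3))))))))) else (if s2 = 0 then (if s3 = 0 then (100) else (if s3 = 1 then (100) else (if s3 = 2 then (100) else (if s3 = 3 then (100) else (100))))) else (if s2 = 1 then (if s3 = 0 then (100) else (if s3 = 1 then (100) else (if s3 = 2 then (100) else (if s3 = 3 then (100) else (100))))) else (if s2 = 2 then (if s3 = 0 then (100) else (if s3 = 1 then (100) else (if s3 = 2 then (100) else (if s3 = 3 then (100) else (100))))) else (if s2 = 3 then (if s3 = 0 then (100) else (if s3 = 1 then (100) else (if s3 = 2 then (100) else (if s3 = 3 then (100) else (100))))) else (if s3 = 0 then (100) else (if s3 = 1 then (100) else (if s3 = 2 then (100) else (if s3 = 3 then (100) else (1))))))))))))) else (if s0 = 1 then (if s1 = 0 then (if s2 = 0 then (if s3 = 0 then (3) else (if s3 = 1 then (3) else (if s3 = 2 then (3) else (if s3 = 3 then (3) else (3))))) else (if s2 = 1 then (if s3 = 0 then (1) else (if s3 = 1 then (1) else (if s3 = 2 then (1) else (if s3 = 3 then (1) else (1))))) else (if s2 = 2 then (if s3 = 0 then (3) else (if s3 = 1 then (3) else (if s3 = 2 then (3) else (if s3 = 3 then (3) else (3))))) else (if s2 = 3 then (if s3 = 0 then (1) else (if s3 = 1 then (1) else (if s3 = 2 then (1) else (if s3 = 3 then (1) else (1))))) else (if s3 = 0 then (100) else (if s3 = 1 then (100) else (if s3 = 2 then (100) else (if s3 = 3 then (100) else (3))))))))) else (if s1 = 1 then (if s2 = 0 then (if s3 = 0 then (1) else (if s3 = 1 then (1) else (if s3 = 2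 then (1) else (if s3 = 3 then (1) else (1))))) else (if s2 = 1 then (if s3 = 0 then (1) else (if s3 = 1 then (1) else (if s3 = 2 then (1) else (if s3 = 3 then (1) else (1))))) else (if s2 = 2 then (if s3 = 0 then (1) else (if s3 = 1 then (1) else (if s3 = 2 then (1) else (if s3 = 3 then (1) else (1))))) else (if s2 = 3 then (if s3 = 0 then (1) else (if s3 = 1 then (1) else (if s3 = 2 then (1) else (if s3 = 3 then (1) else (1))))) else (if s3 = 0 then (100) else (if s3 = 1 then (100) else (if s3 = 2 then (100) else (if s3 = 3 then (100) else (1))))))))) else (if s1 = 2 then (if s2 = 0 then (if s3 = 0 then (2) else (if s3 = 1 then (2) else (if s3 = 2 then (2) else (if s3 = 3 then (2) else (2))))) else (if s2 = 1 then (if s3 = 0 then (1) else (if s3 = 1 then (1) else (if s3 = 2 then (1) else (if s3 = 3 then (1) else (1))))) else (if s2 = 2 then (if s3 = 0 then (2) else (if s3 = 1 then (2) else (if s3 = 2 then (2) else (if s3 = 3 then (2) else (2))))) else (if s2 = 3 then (if s3 = 0 then (1) else (if s3 = 1 then (1) else (if s3 = 2 then (1) else (if s3 = 3 then (1) else (1))))) else (if s3 = 0 then (100) else (if s3 = 1 then (100) else (if s3 = 2 then (100) else (if s3 = 3 then (100) else (2))))))))) else (if s1 = 3 then (if s2 = 0 then (if s3 = 0 then (1) else (if s3 = 1 then (1) else (if s3 = 2 then (1) else (if s3 = 3 then (1) else (1))))) else (if s2 = 1 then (if s3 = 0 then (1) else (if s3 = 1 then (1) else (if s3 = 2 then (1)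 else (if s3 = 3 then (1) else (1))))) else (if s2 = 2 then (if s3 = 0 then (1) else (if s3 = 1 then (1) else (if s3 = 2 then (1) else (if s3 = 3 then (1) else (1))))) else (if s2 = 3 then (if s3 = 0 then (1) else (if s3 = 1 then (1) else (if s3 = 2 then (1) else (if s3 = 3 then (1) else (1))))) else (if s3 = 0 then (100) else (if s3 = 1 then (100) else (if s3 = 2 then (100) else (if s3 = 3 then (100) else (1))))))))) else (if s2 = 0 then (if s3 = 0 then (100) else (if s3 = 1 then (100) else (if s3 = 2 then (100) else (if s3 = 3 then (100) else (100))))) else (if s2 = 1 then (if s3 = 0 then (100) else (if s3 = 1 then (100) else (if s3 = 2 then (100) else (if s3 = 3 then (100) else (100))))) else (if s2 = 2 then (if s3 = 0 then (100) else (if s3 = 1 then (100) else (if s3 = 2 then (100) else (if s3 = 3 then (100) else (100))))) else (if s2 = 3 then (if s3 = 0 then (100) else (if s3 = 1 then (100) else (if s3 = 2 then (100) else (if s3 = 3 then (100) else (100))))) else (if s3 = 0 then (100) else (if s3 = 1 then (100) else (if s3 = 2 then (100) else (if s3 = 3 then (100) else (1))))))))))))) else (if s0 = 2 then (if s1 = 0 then (if s2 = 0 then (if s3 = 0 then (3) else (if s3 = 1 then (3) else (if s3 = 2 then (3) else (if s3 = 3 then (3) else (3))))) else (if s2 = 1 then (if s3 = 0 then (3) else (if s3 = 1 then (3) else (if s3 = 2 then (3) else (if s3 = 3 then (3) else (3))))) else (if s2 = 2 then (if s3 = 0 then (1) else (if s3 = 1 then (1) else (if s3 = 2 then (1) else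 (if s3 = 3 then (1) else (1))))) else (if s2 = 3 then (if s3 = 0 then (1) else (if s3 = 1 then (1) else (if s3 = 2 then (1) else (if s3 = 3 then (1) else (1))))) else (if s3 = 0 then (100) else (if s3 = 1 then (100) else (if s3 = 2 then (100) else (if s3 = 3 then (100) else (3))))))))) else (if s1 = 1 then (if s2 = 0 then (if s3 = 0 then (2) else (if s3 = 1 then (2) else (if s3 = 2 then (2) else (if s3 = 3 then (2) else (2))))) else (if s2 = 1 then (if s3 = 0 then (2) else (if s3 = 1 then (2) else (if s3 = 2 then (2) else (if s3 = 3 then (2) else (2))))) else (if s2 = 2 then (if s3 = 0 then (1) else (if s3 = 1 then (1) else (if s3 = 2 then (1) else (if s3 = 3 then (1) else (1))))) else (if s2 = 3 then (if s3 = 0 then (1) else (if s3 = 1 then (1) else (if s3 = 2 then (1) else (if s3 = 3 then (1) else (1))))) else (if s3 = 0 then (100) else (if s3 = 1 then (100) else (if s3 = 2 then (100) else (if s3 = 3 then (100) else (2))))))))) else (if s1 = 2 then (if s2 = 0 then (if s3 = 0 then (1) else (if s3 = 1 then (1) else (if s3 = 2 then (1) else (if s3 = 3 then (1) else (1))))) else (if s2 = 1 then (if s3 = 0 then (1) else (if s3 = 1 then (1) else (if s3 = 2 then (1) else (if s3 = 3 then (1) else (1))))) else (if s2 = 2 then (if s3 = 0 then (1) else (if s3 = 1 then (1) else (if s3 = 2 then (1) else (if s3 = 3 then (1) else (1))))) else (if s2 = 3 then (if s3 = 0 then (1) else (if s3 = 1 then (1) else (if s3 = 2 then (1) else (if s3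 = 3 then (1) else (1))))) else (if s3 = 0 then (100) else (if s3 = 1 then (100) else (if s3 = 2 then (100) else (if s3 = 3 then (100) else (1))))))))) else (if s1 = 3 then (if s2 = 0 then (if s3 = 0 then (1) else (if s3 = 1 then (1) else (if s3 = 2 then (1) else (if s3 = 3 then (1) else (1))))) else (if s2 = 1 then (if s3 = 0 then (1) else (if s3 = 1 then (1) else (if s3 = 2 then (1) else (if s3 = 3 then (1) else (1))))) else (if s2 = 2 then (if s3 = 0 then (1) else (if s3 = 1 then (1) else (if s3 = 2 then (1) else (if s3 = 3 then (1) else (1))))) else (if s2 = 3 then (if s3 = 0 then (1) else (if s3 = 1 then (1) else (if s3 = 2 then (1) else (if s3 = 3 then (1) else (1))))) else (if s3 = 0 then (100) else (if s3 = 1 then (100) else (if s3 = 2 then (100) else (if s3 = 3 then (100) else (1))))))))) else (if s2 = 0 then (if s3 = 0 then (100) else (if s3 = 1 then (100) else (if s3 = 2 then (100) else (if s3 = 3 then (100) else (100))))) else (if s2 = 1 then (if s3 = 0 then (100) else (if s3 = 1 then (100) else (if s3 = 2 then (100) else (if s3 = 3 then (100) else (100))))) else (if s2 = 2 then (if s3 = 0 then (100) else (if s3 = 1 then (100) else (if s3 = 2 then (100) else (if s3 = 3 then (100) else (100))))) else (if s2 = 3 then (if s3 = 0 then (100) else (if s3 = 1 then (100) else (if s3 = 2 then (100) else (if s3 = 3 then (100) else (100))))) else (if s3 = 0 then (100) else (if s3 = 1 then (100) else (if s3 = 2 then (100) else (if s3 = 3 then (100) else (1))))))))))))) else (if s0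 = 3 then (if s1 = 0 then (if s2 = 0 then (if s3 = 0 then (4) else (if s3 = 1 then (4) else (if s3 = 2 then (4) else (if s3 = 3 then (4) else (4))))) else (if s2 = 1 then (if s3 = 0 then (3) else (if s3 = 1 then (3) else (if s3 = 2 then (3) else (if s3 = 3 then (3) else (3))))) else (if s2 = 2 then (if s3 = 0 then (3) else (if s3 = 1 then (3) else (if s3 = 2 then (3) else (if s3 = 3 then (3) else (3))))) else (if s2 = 3 then (if s3 = 0 then (2) else (if s3 = 1 then (2) else (if s3 = 2 then (2) else (if s3 = 3 then (2) else (2))))) else (if s3 = 0 then (100) else (if s3 = 1 then (100) else (if s3 = 2 then (100) else (if s3 = 3 then (100) else (4))))))))) else (if s1 = 1 then (if s2 = 0 then (if s3 = 0 then (2) else (if s3 = 1 then (2) else (if s3 = 2 then (2) else (if s3 = 3 then (2) else (2))))) else (if s2 = 1 then (if s3 = 0 then (2) else (if s3 = 1 then (2) else (if s3 = 2 then (2) else (if s3 = 3 then (2) else (2))))) else (if s2 = 2 then (if s3 = 0 then (2) else (if s3 = 1 then (2) else (if s3 = 2 then (2) else (if s3 = 3 then (2) else (2))))) else (if s2 = 3 then (if s3 = 0 then (2) else (if s3 = 1 then (2) else (if s3 = 2 then (2) else (if s3 = 3 then (2) else (2))))) else (if s3 = 0 then (100) else (if s3 = 1 then (100) else (if s3 = 2 then (100) else (if s3 = 3 then (100) else (2))))))))) else (if s1 = 2 then (if s2 = 0 then (if s3 = 0 then (2) else (if s3 = 1 then (2) else (if s3 = 2 then (2) else (if s3 = 3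 then (2) else (2))))) else (if s2 = 1 then (if s3 = 0 then (2) else (if s3 = 1 then (2) else (if s3 = 2 then (2) else (if s3 = 3 then (2) else (2))))) else (if s2 = 2 then (if s3 = 0 then (2) else (if s3 = 1 then (2) else (if s3 = 2 then (2) else (if s3 = 3 then (2) else (2))))) else (if s2 = 3 then (if s3 = 0 then (2) else (if s3 = 1 then (2) else (if s3 = 2 then (2) else (if s3 = 3 then (2) else (2))))) else (if s3 = 0 then (100) else (if s3 = 1 then (100) else (if s3 = 2 then (100) else (if s3 = 3 then (100) else (2))))))))) else (if s1 = 3 then (if s2 = 0 then (if s3 = 0 then (2) else (if s3 = 1 then (2) else (if s3 = 2 then (2) else (if s3 = 3 then (2) else (2))))) else (if s2 = 1 then (if s3 = 0 then (2) else (if s3 = 1 then (2) else (if s3 = 2 then (2) else (if s3 = 3 then (2) else (2))))) else (if s2 = 2 then (if s3 = 0 then (2) else (if s3 = 1 then (2) else (if s3 = 2 then (2) else (if s3 = 3 then (2) else (2))))) else (if s2 = 3 then (if s3 = 0 then (2) else (if s3 = 1 then (2) else (if s3 = 2 then (2) else (if s3 = 3 then (2) else (2))))) else (if s3 = 0 then (100) else (if s3 = 1 then (100) else (if s3 = 2 then (100) else (if s3 = 3 then (100) else (2))))))))) else (if s2 = 0 then (if s3 = 0 then (100) else (if s3 = 1 then (100) else (if s3 = 2 then (100) else (if s3 = 3 then (100) else (100))))) else (if s2 = 1 then (if s3 = 0 then (100) else (if s3 = 1 then (100) else (if s3 = 2 then (100) else (if s3 = 3 then (100) else (100))))) else (if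 s2 = 2 then (if s3 = 0 then (100) else (if s3 = 1 then (100) else (if s3 = 2 then (100) else (if s3 = 3 then (100) else (100))))) else (if s2 = 3 then (if s3 = 0 then (100) else (if s3 = 1 then (100) else (if s3 = 2 then (100) else (if s3 = 3 then (100) else (100))))) else (if s3 = 0 then (100) else (if s3 = 1 then (100) else (if s3 = 2 then (100) else (if s3 = 3 then (100) else (2))))))))))))) else (if s1 = 0 then (if s2 = 0 then (if s3 = 0 then (100) else (if s3 = 1 then (100) else (if s3 = 2 then (100) else (if s3 = 3 then (100) else (100))))) else (if s2 = 1 then (if s3 = 0 then (100) else (if s3 = 1 then (100) else (if s3 = 2 then (100) else (if s3 = 3 then (100) else (100))))) else (if s2 = 2 then (if s3 = 0 then (100) else (if s3 = 1 then (100) else (if s3 = 2 then (100) else (if s3 = 3 then (100) else (100))))) else (if s2 = 3 then (if s3 = 0 then (0) else (if s3 = 1 then (0) else (if s3 = 2 then (0) else (if s3 = 3 then (0) else (0))))) else (if s3 = 0 then (100) else (if s3 = 1 then (100) else (if s3 = 2 then (100) else (if s3 = 3 then (100) else (100))))))))) else (if s1 = 1 then (if s2 = 0 then (if s3 = 0 then (100) else (if s3 = 1 then (0) else (if s3 = 2 then (100) else (if s3 = 3 then (0) else (100))))) else (if s2 = 1 then (if s3 = 0 then (0) else (if s3 = 1 then (0) else (if s3 = 2 then (0) else (if s3 = 3 then (0) else (0))))) else (if s2 = 2 then (if s3 = 0 then (100) else (if s3 = 1 then (0) else (if s3 = 2 then (100) else (if s3 = 3 then (0) else (100))))) else (if s2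 = 3 then (if s3 = 0 then (0) else (if s3 = 1 then (0) else (if s3 = 2 then (0) else (if s3 = 3 then (0) else (0))))) else (if s3 = 0 then (100) else (if s3 = 1 then (100) else (if s3 = 2 then (100) else (if s3 = 3 then (100) else (0))))))))) else (if s1 = 2 then (if s2 = 0 then (if s3 = 0 then (100) else (if s3 = 1 then (100) else (if s3 = 2 then (0) else (if s3 = 3 then (0) else (100))))) else (if s2 = 1 then (if s3 = 0 then (100) else (if s3 = 1 then (100) else (if s3 = 2 then (0) else (if s3 = 3 then (0) else (100))))) else (if s2 = 2 then (if s3 = 0 then (0) else (if s3 = 1 then (0) else (if s3 = 2 then (0) else (if s3 = 3 then (0) else (0))))) else (if s2 = 3 then (if s3 = 0 then (0) else (if s3 = 1 then (0) else (if s3 = 2 then (0) else (if s3 = 3 then (0) else (0))))) else (if s3 = 0 then (100) else (if s3 = 1 then (100) else (if s3 = 2 then (100) else (if s3 = 3 then (100) else (0))))))))) else (if s1 = 3 then (if s2 = 0 then (if s3 = 0 then (0) else (if s3 = 1 then (0) else (if s3 = 2 then (0) else (if s3 = 3 then (0) else (0))))) else (if s2 = 1 then (if s3 = 0 then (0) else (if s3 = 1 then (0) else (if s3 = 2 then (0) else (if s3 = 3 then (0) else (0))))) else (if s2 = 2 then (if s3 = 0 then (0) else (if s3 = 1 then (0) else (if s3 = 2 then (0) else (if s3 = 3 then (0) else (0))))) else (if s2 = 3 then (if s3 = 0 then (0) else (if s3 = 1 then (0) else (if s3 = 2 then (0) else (if s3 = 3 then (0) else (0))))) else (if s3 = 0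 then (100) else (if s3 = 1 then (100) else (if s3 = 2 then (100) else (if s3 = 3 then (100) else (0))))))))) else (if s2 = 0 then (if s3 = 0 then (100) else (if s3 = 1 then (100) else (if s3 = 2 then (100) else (if s3 = 3 then (100) else (100))))) else (if s2 = 1 then (if s3 = 0 then (100) else (if s3 = 1 then (100) else (if s3 = 2 then (100) else (if s3 = 3 then (100) else (100))))) else (if s2 = 2 then (if s3 = 0 then (100) else (if s3 = 1 then (100) else (if s3 = 2 then (100) else (if s3 = 3 then (100) else (100))))) else (if s2 = 3 then (if s3 = 0 then (100) else (if s3 = 1 then (100) else (if s3 = 2 then (100) else (if s3 = 3 then (100) else (100))))) else (if s3 = 0 then (100) else (if s3 = 1 then (100) else (if s3 = 2 then (100) else (if s3 = 3 then (100) else (100)))))))))))))))))"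


lemma five: "(s::nat) < 5 \<Longrightarrow> s = 0 \<or> s = 1 \<or> s = 2 \<or> s = 3 \<or> s = 4" by auto

lemma step_fin:
  assumes "s0 < 5" "s1 < 5" "s2 < 5" "s3 < 5" "s4 < 5" "valid s0 s1 s2 s3 s4"
  shows "pot s1 s2 s3 s4 \<le> pot s0 s1 s2 s3 + 4 * cnt s1 - 3"
  using five[OF assms(1)] five[OF assms(2)] five[OF assms(3)] five[OF assms(4)] five[OF assms(5)] assms(6)
  apply (elim disjE)
  apply (simp_all add: valid_def rowok_def X_def cnt_def pot_def)
  done


lemma start_fin:
  assumes "s1 < 5" "s2 < 5" "s3 < 5" "s4 < 5" "valid 4 s1 s2 s3 s4"
  shows "pot 4 s1 s2 s3 \<le> 0"
  using five[OF assms(1)] five[OF assms(2)] five[OF assms(3)] five[OF assms(4)] assms(5)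
  apply (elim disjE)
  apply (simp_all add: valid_def rowok_def X_def cnt_def pot_def)
  done

lemma end_fin:
  assumes "s < 4"
  shows "pot s 4 4 4 \<ge> -1"
  using assms by (auto simp: pot_def less_Suc_eq numeral_eq_Suc)

definition ycol :: "(nat \<times> nat) set \<Rightarrow> nat \<Rightarrow> nat \<Rightarrow> nat" where
  "ycol C n k = (if 1 \<le> k \<and> k \<le> n then (if (0,k-1) \<in> C then 1 else 0) + (if (1,k-1) \<in> C then 2 else 0) else 4)"

lemma ycol_lt5: "ycol C n k < 5" by (simp add: ycol_def)
lemma ycol_lt4: "1 \<le> k \<Longrightarrow> k \<le> n \<Longrightarrow> ycol C n k < 4" by (simp add: ycol_def)
lemma ycol_4: "\<not> (1 \<le> k \<and> k \<le> n) \<Longrightarrow> ycol C n k = 4" by (simp add: ycol_def)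
lemma ycol_ne4: "ycol C n k \<noteq> 4 \<longleftrightarrow> 1 \<le> k \<and> k \<le> n" by (simp add: ycol_def)

lemma X0_ycol: "C \<subseteq> grid_V n \<Longrightarrow> X 0 (ycol C n k) \<longleftrightarrow> 1 \<le> k \<and> (0, k-1) \<in> C"
  by (auto simp: ycol_def X_def grid_V_def)
lemma X1_ycol: "C \<subseteq> grid_V n \<Longrightarrow> X 1 (ycol C n k) \<longleftrightarrow> 1 \<le> k \<and> (1, k-1) \<in> C"
  by (auto simp: ycol_def X_def grid_V_def)



lemma nbhd_char:
  assumes "r < 2"
  shows "w \<in> closed_nbhd (grid_V n) grid_E (r,c) \<longleftrightarrow>
     w \<in> grid_V n \<and> (w = (r,c) \<or> w = (1-r,c) \<or> (c \<ge> 1 \<and> w = (r,c-1)) \<or> w = (r,c+1))"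
  using assms
  by (cases w) (auto simp: closed_nbhd_def grid_E_def path_adj_def grid_V_def)

lemma L1:
  assumes "locating_dominating (grid_V n) grid_E C" "r < 2" "(r,c) \<in> grid_V n" "(r,c) \<notin> C"
  shows "(c \<ge> 1 \<and> (r,c-1) \<in> C) \<or> (1-r,c) \<in> C \<or> (r,c+1) \<in> C"
proof -
  from assms have "closed_nbhd (grid_V n) grid_E (r,c) \<inter> C \<noteq> {}"
    unfolding locating_dominating_def by blast
  then obtain w where "w \<in> closed_nbhd (grid_V n) grid_E (r,c)" "w \<in> C" by blast
  then show ?thesis using assms(2,4) nbhd_char[OF assms(2), of w n c] by auto
qed

lemma L2:
  assumes "locating_dominating (grid_V n) grid_E C" "r < 2" "(r,c) \<in> grid_V n" "(r,c) \<notin> C"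
    "(1-r,c+1) \<in> grid_V n" "(1-r,c+1) \<notin> C"
  shows "(c \<ge> 1 \<and> (r,c-1) \<in> C) \<or> (1-r,c+2) \<in> C"
proof (rule ccontr)
  assume H: "\<not> ?thesis"
  have r2: "1 - r < 2" "1 - (1 - r) = r" using assms(2) by auto
  have ne: "(r,c) \<noteq> (1-r,c+1)" by simp
  have "closed_nbhd (grid_V n) grid_E (r,c) \<inter> C = closed_nbhd (grid_V n) grid_E (1-r,c+1) \<inter> C"
  proof (rule set_eqI)
    fix w
    show "w \<in> closed_nbhd (grid_V n) grid_E (r,c) \<inter> C \<longleftrightarrow> w \<in> closed_nbhd (grid_V n) grid_E (1-r,c+1) \<inter> C"
      unfolding Int_iff nbhd_char[OF assms(2)] nbhd_char[OF r2(1)] r2(2)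
      using H assms(4,6) by auto
  qed
  then show False using assms ne unfolding locating_dominating_def by blast
qed

lemma L3:
  assumes "locating_dominating (grid_V n) grid_E C" "r < 2" "(r,c) \<in> grid_V n" "(r,c) \<notin> C"
    "(r,c+2) \<in> grid_V n" "(r,c+2) \<notin> C"
  shows "(c \<ge> 1 \<and> (r,c-1) \<in> C) \<or> (1-r,c) \<in> C \<or> (1-r,c+2) \<in> C \<or> (r,c+3) \<in> C"
proof (rule ccontr)
  assume H: "\<not> ?thesis"
  have ne: "(r,c) \<noteq> (r,c+2)" by simp
  have "closed_nbhd (grid_V n) grid_E (r,c) \<inter> C = closed_nbhd (grid_V n) grid_E (r,c+2) \<inter> C"
  proof (rule set_eqI)
    fix w
    show "w \<in> closed_nbhd (grid_V n) grid_E (r,c) \<inter> C \<longleftrightarrow> w \<in> closed_nbhd (grid_V n) grid_E (r,c+2) \<inter> C"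
      unfolding Int_iff nbhd_char[OF assms(2)]
      using H assms(4,6) by (auto simp: numeral_3_eq_3)
  qed
  then show False using assms ne unfolding locating_dominating_def by blast
qed

lemma LD_sub: "locating_dominating V E C \<Longrightarrow> C \<subseteq> V"
  by (simp add: locating_dominating_def)

lemma gridV_iff: "(r,c) \<in> grid_V n \<longleftrightarrow> r < 2 \<and> c < n"
  by (simp add: grid_V_def)

lemma ycol_eq4: "ycol C n k = 4 \<longleftrightarrow> \<not> (1 \<le> k \<and> k \<le> n)" by (simp add: ycol_def)
lemma X1s_ycol: "C \<subseteq> grid_V n \<Longrightarrow> X (Suc 0) (ycol C n k) \<longleftrightarrow> 1 \<le> k \<and> (1, k-1) \<in> C"
  using X1_ycol by simp

lemma window_valid:
  assumes LD: "locating_dominating (grid_V n) grid_E C" and k: "1 \<le> k" "k \<le> n"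
  shows "valid (ycol C n (k-1)) (ycol C n k) (ycol C n (k+1)) (ycol C n (k+2)) (ycol C n (k+3))"
proof -
  have sub: "C \<subseteq> grid_V n" using LD by (rule LD_sub)
  obtain c where kc: "k = Suc c" using k by (cases k) auto
  have cn: "c < n" using k kc by simp
  note A10 = L1[OF LD, of 0 c] and A11 = L1[OF LD, of 1 c]
  note A20 = L2[OF LD, of 0 c] and A21 = L2[OF LD, of 1 c]
  note A30 = L3[OF LD, of 0 c] and A31 = L3[OF LD, of 1 c]
  have mem: "\<And>r j. (r,j) \<in> C \<Longrightarrow> j < n" using sub by (auto simp: grid_V_def)
  show ?thesis
    unfolding valid_def rowok_def
    using A10 A11 A20 A21 A30 A31 cn mem
    apply (simp add: X0_ycol[OF sub] X1_ycol[OF sub] X1s_ycol[OF sub] ycol_eq4 kc gridV_iff)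
    apply (simp add: add.commute)
    done
qed

definition PP :: "(nat \<times> nat) set \<Rightarrow> nat \<Rightarrow> nat \<Rightarrow> int" where
  "PP C n k = pot (ycol C n (k-1)) (ycol C n k) (ycol C n (k+1)) (ycol C n (k+2))"

lemma PP_step:
  assumes LD: "locating_dominating (grid_V n) grid_E C" and k: "1 \<le> k" "k \<le> n"
  shows "PP C n (k+1) \<le> PP C n k + 4 * cnt (ycol C n k) - 3"
  using step_fin[OF ycol_lt5 ycol_lt5 ycol_lt5 ycol_lt5 ycol_lt5 window_valid[OF LD k]]
  by (simp add: PP_def add.assoc numeral_3_eq_3)

lemma PP_accum:
  assumes LD: "locating_dominating (grid_V n) grid_E C"
  shows "m \<le> n \<Longrightarrow> PP C n (m+1) \<le> PP C n 1 + (\<Sum>k\<in>{1..m}. 4 * cnt (ycol C n k) - 3)"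
proof (induction m)
  case 0
  then show ?case by simp
next
  case (Suc m)
  have "PP C n (Suc m + 1) \<le> PP C n (Suc m) + 4 * cnt (ycol C n (Suc m)) - 3"
    using PP_step[OF LD, of "Suc m"] Suc.prems by simp
  then show ?case using Suc by simp
qed

lemma card_col:
  assumes sub: "C \<subseteq> grid_V n"
  shows "int (card C) = (\<Sum>k\<in>{1..n}. cnt (ycol C n k))"
proof -
  have eq: "C = (\<Union>j\<in>{..<n}. C \<inter> {(0,j),(1,j)})"
  proof
    show "C \<subseteq> (\<Union>j\<in>{..<n}. C \<inter> {(0,j),(1,j)})"
    proof
      fix p assume "p \<in> C"
      then obtain a b where p: "p = (a,b)" "a < 2" "b < n" using sub by (cases p) (auto simp: grid_V_def)
      then have "a = 0 \<or> a = 1" by auto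
      then show "p \<in> (\<Union>j\<in>{..<n}. C \<inter> {(0,j),(1,j)})" using p \<open>p \<in> C\<close> by auto
    qed
  qed auto
  have "card C = (\<Sum>j<n. card (C \<inter> {(0,j),(1,j)}))"
    by (subst eq, rule card_UN_disjoint) auto
  then have "int (card C) = (\<Sum>j<n. int (card (C \<inter> {(0,j),(1,j)})))" by simp
  also have "\<dots> = (\<Sum>j<n. cnt (ycol C n (Suc j)))"
  proof (rule sum.cong)
    fix j assume "j \<in> {..<n}"
    then have jn: "j < n" by simp
    show "int (card (C \<inter> {(0,j),(1,j)})) = cnt (ycol C n (Suc j))"
    proof (cases "(0,j) \<in> C"; cases "(1,j) \<in> C")
      assume "(0,j) \<in> C" "(1,j) \<in> C"
      then have "C \<inter> {(0,j),(1,j)} = {(0,j),(1,j)}" by auto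
      then show ?thesis using jn \<open>(0,j) \<in> C\<close> \<open>(1,j) \<in> C\<close> by (simp add: ycol_def cnt_def)
    next
      assume "(0,j) \<in> C" "(1,j) \<notin> C"
      then have "C \<inter> {(0,j),(1,j)} = {(0,j)}" by auto
      then show ?thesis using jn \<open>(0,j) \<in> C\<close> \<open>(1,j) \<notin> C\<close> by (simp add: ycol_def cnt_def)
    next
      assume "(0,j) \<notin> C" "(1,j) \<in> C"
      then have "C \<inter> {(0,j),(1,j)} = {(1,j)}" by auto
      then show ?thesis using jn \<open>(0,j) \<notin> C\<close> \<open>(1,j) \<in> C\<close> by (simp add: ycol_def cnt_def)
    next
      assume "(0,j) \<notin> C" "(1,j) \<notin> C"
      then have "C \<inter> {(0,j),(1,j)} = {}" by auto
      then show ?thesis using jn \<open>(0,j) \<notin> C\<close> \<open>(1,j) \<notin> C\<close> by (simp add: ycol_def cnt_def)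
    qed
  qed simp
  also have "\<dots> = (\<Sum>k\<in>{1..n}. cnt (ycol C n k))"
    using sum.atLeast1_atMost_eq[of "\<lambda>k. cnt (ycol C n k)" n] by simp
  finally show ?thesis .
qed

lemma card_bound:
  assumes LD: "locating_dominating (grid_V n) grid_E C" and n: "n \<ge> 2"
  shows "4 * int (card C) \<ge> 3 * int n - 1"
proof -
  have sub: "C \<subseteq> grid_V n" using LD by (rule LD_sub)
  have acc: "PP C n (n+1) \<le> PP C n 1 + (\<Sum>k\<in>{1..n}. 4 * cnt (ycol C n k) - 3)"
    using PP_accum[OF LD] by simp
  have y0: "ycol C n 0 = 4" by (simp add: ycol_def)
  have v1: "valid 4 (ycol C n 1) (ycol C n 2) (ycol C n 3) (ycol C n 4)"
    using window_valid[OF LD, of 1] n y0 by (simp add: eval_nat_numeral)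
  have P1: "PP C n 1 \<le> 0"
    using start_fin[OF ycol_lt5 ycol_lt5 ycol_lt5 ycol_lt5 v1] y0 by (simp add: PP_def eval_nat_numeral)
  have yn: "ycol C n n < 4" using n by (intro ycol_lt4) auto
  have "ycol C n (n+1) = 4" "ycol C n (n+2) = 4" "ycol C n (n+3) = 4" by (simp_all add: ycol_def)
  then have Pn: "PP C n (n+1) \<ge> -1"
    using end_fin[OF yn] by (simp add: PP_def numeral_3_eq_3)
  have "(\<Sum>k\<in>{1..n}. 4 * cnt (ycol C n k) - 3) = 4 * (\<Sum>k\<in>{1..n}. cnt (ycol C n k)) - 3 * int n"
    by (simp add: sum_subtractf sum_distrib_left)
  then show ?thesis using acc P1 Pn card_col[OF sub] by linarith
qed

theorem lemma4p6:
  fixes n :: nat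
  assumes "n \<ge> 2"
  shows "LD (grid_V n) grid_E \<ge> nat \<lceil>(3 * real n - 1) / 4\<rceil>"
proof -
  let ?S = "{C. locating_dominating (grid_V n) grid_E C}"
  have finV: "finite (grid_V n)" by (simp add: grid_V_def)
  have fin: "finite ?S"
    by (rule finite_subset[of _ "Pow (grid_V n)"]) (auto simp: locating_dominating_def finV)
  have ne: "grid_V n \<in> ?S" by (simp add: locating_dominating_def)
  have "LD (grid_V n) grid_E \<in> card ` ?S"
    unfolding LD_def using fin ne by (intro Min_in) auto
  then obtain C where C: "locating_dominating (grid_V n) grid_E C" and eq: "LD (grid_V n) grid_E = card C"
    by auto
  have b: "4 * int (card C) \<ge> 3 * int n - 1" using card_bound[OF C assms] .
  have R: "(3 * real n - 1) / 4 \<le> real (card C)"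
  proof -
    have "4 * real (card C) \<ge> 3 * real n - 1" using b by linarith
    then show ?thesis by simp
  qed
  then show ?thesis using eq R by (simp add: field_simps)
qed

end
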